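(* For all $n\ge0$ and $j=0,1,2$, \[ c_{3n+j}^2=\delta_{j,0}+(1-\delta_{j,0})c_{j-1}^2+\sum_{k=1}^n\left\{c_{3k+j-1}^2+2\sum_{i=0}^{3(k-1)+j}p_{3k+j-1-i}c_i^2\right\}. \]
   Context: The Narayana's cows numbers $c_n$ are defined by $c_n=\delta_{n,0}+c_{n-1}+c_{n-3}$ for $n\ge0$, $c_n=0$ for $n<0$. The Padovan numbers $p_n$ are defined by $p_n=\delta_{n,0}+p_{n-2}+p_{n-3}$ for $n\ge0$, $p_n=0$ for $n<0$. $\delta_{i,j}$ is $1$ if $i=j$ and $0$ otherwise. Empty sums are $0$. *)

theory Defs
  imports Main
begin

function cow :: "int \<Rightarrow> int" where
  "cow n = (if n < 0 then 0 else (if n = 0 then 1 else 0) + cow (n - 1) + cow (n - 3))"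
  by auto
termination by (relation "measure (\<lambda>n. nat (n + 1))") auto

function padovan :: "int \<Rightarrow> int" where
  "padovan n = (if n < 0 then 0 else (if n = 0 then 1 else 0) + padovan (n - 2) + padovan (n - 3))"
  by auto
termination by (relation "measure (\<lambda>n. nat (n + 1))") auto

end

theory Submission
  imports Defs
begin

declare cow.simps[simp del] padovan.simps[simp del]
lemma cow_neg: "n < 0 \<Longrightarrow> cow n = 0" by (subst cow.simps) simp
lemma pad_neg: "n < 0 \<Longrightarrow> padovan n = 0" by (subst padovan.simps) simp
lemma cow_rec: "n \<ge> 1 \<Longrightarrow> cow n = cow (n-1) + cow (n-3)" by (subst cow.simps) simp
lemma pad_rec: "n \<ge> 1 \<Longrightarrow> padovan n = padovan (n-2) + padovan (n-3)" by (subst padovan.simps) simp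
lemma cow0: "cow 0 = 1" by (subst cow.simps) (simp add: cow_neg)
lemma cow1: "cow 1 = 1" by (simp add: cow_rec cow0 cow_neg)
lemma cow2: "cow 2 = 1" by (simp add: cow_rec cow1 cow_neg)
lemma cow3: "cow 3 = 2" by (simp add: cow_rec cow0 cow1 cow2)
lemma cow4: "cow 4 = 3" by (simp add: cow_rec cow1 cow2 cow3)
lemma cow5: "cow 5 = 4" by (simp add: cow_rec cow1 cow2 cow3 cow4)
lemma pad0: "padovan 0 = 1" by (subst padovan.simps) (simp add: pad_neg)
lemma pad1: "padovan 1 = 0" by (subst padovan.simps) (simp add: pad_neg)
lemma pad2: "padovan 2 = 1" by (simp add: pad_rec pad0 pad_neg)
lemma pad3: "padovan 3 = 1" by (simp add: pad_rec pad0 pad1)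
lemma pad4: "padovan 4 = 1" by (simp add: pad_rec pad1 pad2)
lemma padm1: "padovan (-1) = 0" by (simp add: pad_neg)

definition S :: "nat \<Rightarrow> int" where
  "S m = (\<Sum>i\<le>m. padovan (int m + 2 - int i) * (cow (int i))^2)"

lemma key: "cow (int m + 2) * cow (int m) = S m"
proof (induction m rule: less_induct)
  case (less m)
  show ?case
  proof (cases "m \<ge> 3")
    case False
    then have "m = 0 \<or> m = 1 \<or> m = 2" by auto
    then show ?thesis
      by (auto simp: S_def numeral_2_eq_2 cow0 cow1 cow2 cow3 cow4 pad0 pad1 pad2 pad3 pad4)
  next
    case True
    then obtain q where m: "m = q + 3" by (metis add.commute le_add_diff_inverse)
    have split: "S m = (\<Sum>i\<le>q+3. padovan (int q + 3 - int i) * (cow (int i))^2)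
        + (\<Sum>i\<le>q+3. padovan (int q + 2 - int i) * (cow (int i))^2)"
    proof -
      have "\<And>i. i \<le> q + 3 \<Longrightarrow> padovan (int q + 5 - int i) =
          padovan (int q + 3 - int i) + padovan (int q + 2 - int i)"
        by (subst pad_rec) (auto simp: algebra_simps)
      then have "S m = (\<Sum>i\<le>q+3. (padovan (int q + 3 - int i) + padovan (int q + 2 - int i)) * (cow (int i))^2)"
        unfolding S_def m by (intro sum.cong) (auto simp: algebra_simps)
      then show ?thesis by (simp add: sum.distrib algebra_simps)
    qed
    have A: "(\<Sum>i\<le>q+3. padovan (int q + 3 - int i) * (cow (int i))^2) = S (q+1) + (cow (int q + 3))^2"
    proof -
      have e: "q + 3 = Suc (Suc (q + 1))" by simp
      show ?thesis unfolding e sum.atMost_Suc S_def by (simp add: pad0 pad1 algebra_simps)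
    qed
    have B: "(\<Sum>i\<le>q+3. padovan (int q + 2 - int i) * (cow (int i))^2) = S q + (cow (int q + 2))^2"
    proof -
      have e: "q + 3 = Suc (Suc (Suc q))" by simp
      show ?thesis unfolding e sum.atMost_Suc S_def by (simp add: pad0 pad1 padm1 algebra_simps)
    qed
    have IH1: "S (q+1) = cow (int q + 3) * cow (int q + 1)"
      using less[of "q+1"] m by (simp add: algebra_simps)
    have IH2: "S q = cow (int q + 2) * cow (int q)"
      using less[of q] m by simp
    have r5: "cow (int q + 5) = cow (int q + 4) + cow (int q + 2)"
      by (subst cow_rec) (auto simp: algebra_simps)
    have r4: "cow (int q + 4) = cow (int q + 3) + cow (int q + 1)"
      by (subst cow_rec) (auto simp: algebra_simps)
    have r3: "cow (int q + 3) = cow (int q + 2) + cow (int q)"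
      by (subst cow_rec) (auto simp: algebra_simps)
    have "cow (int m + 2) * cow (int m) = cow (int q + 5) * cow (int q + 3)"
      using m by (simp add: algebra_simps)
    also have "\<dots> = S m"
      unfolding split A B IH1 IH2 r5 r4 r3 by (simp add: algebra_simps power2_eq_square)
    finally show ?thesis .
  qed
qed

lemma sum_int_nat: "(\<Sum>i = 0..int M. g i) = (\<Sum>i\<le>M. (g (int i) :: int))"
proof (induction M)
  case 0 then show ?case by simp
next
  case (Suc M)
  have "{0..int (Suc M)} = insert (1 + int M) {0..int M}"
    using atLeastAtMostPlus1_int_conv[of 0 "int M"] by simp
  then show ?case using Suc by (simp add: add.commute)
qed

theorem mainTheorem15:
  fixes n :: nat and j :: int
  assumes "j \<in> {0, 1, 2}"
  shows "(cow (3 * int n + j))^2 =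
    (if j = 0 then 1 else 0) + (if j = 0 then 0 else 1) * (cow (j - 1))^2
    + (\<Sum>k = 1..int n. (cow (3 * k + j - 1))^2
        + 2 * (\<Sum>i = 0..3 * (k - 1) + j. padovan (3 * k + j - 1 - i) * (cow i)^2))"
proof (induction n)
  case 0
  then show ?case using assms by (auto simp: cow0 cow1 cow2)
next
  case (Suc n)
  define M where "M = nat (3 * int n + j)"
  have M: "int M = 3 * int n + j" using assms by (auto simp: M_def)
  have set: "{1..int (Suc n)} = insert (1 + int n) {1..int n}"
    using atLeastAtMostPlus1_int_conv[of 1 "int n"] by simp
  have inner: "(\<Sum>i = 0..3 * (1 + int n - 1) + j. padovan (3 * (1 + int n) + j - 1 - i) * (cow i)^2)
     = S M"
  proof -
    have st: "{0..3 * (1 + int n - 1) + j} = {0..int M}" using M by simp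
    have "(\<Sum>i = 0..3 * (1 + int n - 1) + j. padovan (3 * (1 + int n) + j - 1 - i) * (cow i)^2)
       = (\<Sum>i\<le>M. padovan (3 * (1 + int n) + j - 1 - int i) * (cow (int i))^2)"
      unfolding st by (rule sum_int_nat)
    also have "\<dots> = S M" unfolding S_def using M by (intro sum.cong) (auto simp: algebra_simps)
    finally show ?thesis .
  qed
  have K: "cow (int M + 2) * cow (int M) = S M" by (rule key)
  have r: "cow (int M + 3) = cow (int M + 2) + cow (int M)"
    by (subst cow_rec) (auto simp: algebra_simps)
  have e1: "3 * int (Suc n) + j = int M + 3" using M by simp
  have e2: "3 * (1 + int n) + j - 1 = int M + 2" using M by simp
  have e3: "3 * int n + j = int M" using M by simp
  define F where "F k = (cow (3 * k + j - 1))^2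
        + 2 * (\<Sum>i = 0..3 * (k - 1) + j. padovan (3 * k + j - 1 - i) * (cow i)^2)" for k
  have sumF: "sum F {1..int (Suc n)} = sum F {1..int n} + F (1 + int n)"
    unfolding set by (subst sum.insert) auto
  have F1: "F (1 + int n) = (cow (int M + 2))^2 + 2 * S M"
    unfolding F_def inner unfolding e2 by simp
  have IH: "(cow (int M))^2 = (if j = 0 then 1 else 0) + (if j = 0 then 0 else 1) * (cow (j - 1))^2 + sum F {1..int n}"
    using Suc unfolding F_def e3 by simp
  have "(cow (3 * int (Suc n) + j))^2 = (cow (int M))^2 + (cow (int M + 2))^2 + 2 * S M"
    unfolding e1 r K[symmetric] by (simp add: algebra_simps power2_eq_square)
  then have "(cow (3 * int (Suc n) + j))^2 = (if j = 0 then 1 else 0) + (if j = 0 then 0 else 1) * (cow (j - 1))^2 + sum F {1..int (Suc n)}"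
    unfolding sumF F1 IH by simp
  then show ?case unfolding F_def .
qed

end
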